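(* Let $k\ge0$, $m\ge1$, and let $\varepsilon,\varepsilon'\in\{0,1\}^k$ be binary sequences differing only at position $r$ ($1\le r\le k$). Then $P(\varepsilon;b)-P(\varepsilon';b)$ can be written as a quotient $f(a,x)/g(a,x)$ of polynomials with $g$ not divisible by the linear form $M(\varepsilon;b;r)$ $(=M(\varepsilon';b;r))$.
   Context: Let $a=(a_1,\dots,a_k)$ and $x=(x_1,\dots,x_m)$ be indeterminates and $b=(b_1,\dots,b_{k+m}):=(a_1,\dots,a_k,x_1,\dots,x_m)$. For a binary sequence $\varepsilon=(\varepsilon_1,\dots,\varepsilon_k)$ put $\delta^\varepsilon=(\delta^\varepsilon_1,\dots,\delta^\varepsilon_{k+m}):=(1,\varepsilon_1,\dots,\varepsilon_k,0,\dots,0)$ (length $k+m$: a $1$ prepended and $m-1$ zeros appended). Let $L(\delta^\varepsilon,j):=\max\{i\le j:\delta^\varepsilon_i=1\}$, $M(\varepsilon;b;j):=\sum_{\ell=L(\delta^\varepsilon,j)}^{j}b_\ell$, and $P(\varepsilon;b):=\prod_{j=1}^{k+m}\frac1{M(\varepsilon;b;j)}$. *)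

theory Defs
  imports Complex_Main "HOL-Library.Poly_Mapping"
begin

text \<open>Variable number i stands for b_i, i.e. b_i = a_i for 1 <= i <= k and
  b_(k+j) = x_j for 1 <= j <= m.\<close>

type_synonym mpoly = "(nat \<Rightarrow>\<^sub>0 nat) \<Rightarrow>\<^sub>0 real"

definition pvar :: "nat \<Rightarrow> mpoly" where
  "pvar i = Poly_Mapping.single (Poly_Mapping.single i 1) 1"

definition pvars :: "mpoly \<Rightarrow> nat set" where
  "pvars p = \<Union> ((\<lambda>mon :: nat \<Rightarrow>\<^sub>0 nat. Poly_Mapping.keys mon) ` Poly_Mapping.keys p)"

definition peval :: "mpoly \<Rightarrow> (nat \<Rightarrow> real) \<Rightarrow> real" where
  "peval p v = (\<Sum>mon \<in> Poly_Mapping.keys p. Poly_Mapping.lookup p mon * (\<Prod>i \<in> Poly_Mapping.keys mon. v i ^ Poly_Mapping.lookup mon i))"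

text \<open>delta^eps = (1, eps_1, ..., eps_k, 0, ..., 0), indexed 1..k+m (true = 1).\<close>
definition delta :: "(nat \<Rightarrow> bool) \<Rightarrow> nat \<Rightarrow> nat \<Rightarrow> bool" where
  "delta eps k j = (if j = 1 then True else if 2 \<le> j \<and> j \<le> k + 1 then eps (j - 1) else False)"

definition Lidx :: "(nat \<Rightarrow> bool) \<Rightarrow> nat \<Rightarrow> nat \<Rightarrow> nat" where
  "Lidx eps k j = (GREATEST i. 1 \<le> i \<and> i \<le> j \<and> delta eps k i)"

definition Mval :: "(nat \<Rightarrow> bool) \<Rightarrow> nat \<Rightarrow> (nat \<Rightarrow> real) \<Rightarrow> nat \<Rightarrow> real" where
  "Mval eps k b j = (\<Sum>l = Lidx eps k j..j. b l)"

definition Mpoly :: "(nat \<Rightarrow> bool) \<Rightarrow> nat \<Rightarrow> nat \<Rightarrow> mpoly" where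
  "Mpoly eps k j = (\<Sum>l = Lidx eps k j..j. pvar l)"

definition Pval :: "(nat \<Rightarrow> bool) \<Rightarrow> nat \<Rightarrow> nat \<Rightarrow> (nat \<Rightarrow> real) \<Rightarrow> real" where
  "Pval eps k m b = (\<Prod>j = 1..k + m. 1 / Mval eps k b j)"

end

theory Submission imports Defs begin

definition mv :: "(nat \<Rightarrow>\<^sub>0 nat) \<Rightarrow> (nat \<Rightarrow> real) \<Rightarrow> real" where
  "mv mon v = (\<Prod>i \<in> Poly_Mapping.keys mon. v i ^ Poly_Mapping.lookup mon i)"

lemma mv_super: "finite S \<Longrightarrow> Poly_Mapping.keys mon \<subseteq> S \<Longrightarrow>
  mv mon v = (\<Prod>i \<in> S. v i ^ Poly_Mapping.lookup mon i)"
  unfolding mv_def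
  by (rule prod.mono_neutral_left) (auto simp: in_keys_iff)

lemma mv_add: "mv (a + b) v = mv a v * mv b v"
proof -
  let ?S = "Poly_Mapping.keys a \<union> Poly_Mapping.keys b"
  have "mv (a + b) v = (\<Prod>i \<in> ?S. v i ^ Poly_Mapping.lookup (a+b) i)"
    using keys_add[of a b] by (intro mv_super) auto
  also have "\<dots> = (\<Prod>i \<in> ?S. v i ^ Poly_Mapping.lookup a i) * (\<Prod>i \<in> ?S. v i ^ Poly_Mapping.lookup b i)"
    by (simp add: lookup_add power_add prod.distrib)
  also have "\<dots> = mv a v * mv b v"
    by (subst (1 2) mv_super[of ?S]) auto
  finally show ?thesis .
qed

lemma peval_super: "finite S \<Longrightarrow> Poly_Mapping.keys p \<subseteq> S \<Longrightarrow>
  peval p v = (\<Sum>mon \<in> S. Poly_Mapping.lookup p mon * mv mon v)"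
  unfolding peval_def mv_def[symmetric]
  by (rule sum.mono_neutral_left) (auto simp: in_keys_iff)

lemma peval_add: "peval (p + q) v = peval p v + peval q v"
proof -
  let ?S = "Poly_Mapping.keys p \<union> Poly_Mapping.keys q"
  have "peval (p + q) v = (\<Sum>mon \<in> ?S. Poly_Mapping.lookup (p+q) mon * mv mon v)"
    using keys_add[of p q] by (intro peval_super) auto
  also have "\<dots> = peval p v + peval q v"
    by (subst (1 2) peval_super[of ?S]) (auto simp: lookup_add algebra_simps sum.distrib)
  finally show ?thesis .
qed

lemma peval_zero[simp]: "peval 0 v = 0"
  by (simp add: peval_def)

lemma peval_uminus: "peval (- p) v = - peval p v"
  using peval_add[of p "-p" v] by simp

lemma peval_diff: "peval (p - q) v = peval p v - peval q v"
  using peval_add[of p "-q" v] by (simp add: peval_uminus)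

lemma peval_sum: "peval (sum f A) v = (\<Sum>a\<in>A. peval (f a) v)"
  by (induction A rule: infinite_finite_induct) (auto simp: peval_add)

lemma peval_single: "peval (Poly_Mapping.single m c) v = c * mv m v"
  by (subst peval_super[of "{m}"]) auto

lemma poly_sum_monos: "p = (\<Sum>m \<in> Poly_Mapping.keys p. Poly_Mapping.single m (Poly_Mapping.lookup p m))"
  by (rule poly_mapping_eqI)
     (auto simp: lookup_sum lookup_single when_def in_keys_iff)

lemma peval_as_sum: "peval p v = (\<Sum>m \<in> Poly_Mapping.keys p. Poly_Mapping.lookup p m * mv m v)"
  by (simp add: peval_def mv_def)

lemma peval_mult: "peval (p * q) v = peval p v * peval q v"
proof -
  have "p * q = (\<Sum>m \<in> Poly_Mapping.keys p. Poly_Mapping.single m (Poly_Mapping.lookup p m)) *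
      (\<Sum>n \<in> Poly_Mapping.keys q. Poly_Mapping.single n (Poly_Mapping.lookup q n))"
    by (subst (1) poly_sum_monos[of p], subst (1) poly_sum_monos[of q]) (rule refl)
  also have "\<dots> = (\<Sum>m \<in> Poly_Mapping.keys p. \<Sum>n \<in> Poly_Mapping.keys q.
       Poly_Mapping.single (m + n) (Poly_Mapping.lookup p m * Poly_Mapping.lookup q n))"
    by (simp add: sum_product mult_single)
  finally have "peval (p * q) v = (\<Sum>m \<in> Poly_Mapping.keys p. \<Sum>n \<in> Poly_Mapping.keys q.
       Poly_Mapping.lookup p m * Poly_Mapping.lookup q n * (mv m v * mv n v))"
    by (simp add: peval_sum peval_single mv_add)
  also have "\<dots> = peval p v * peval q v"
    by (simp add: peval_as_sum sum_product algebra_simps)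
  finally show ?thesis .
qed

lemma peval_one[simp]: "peval 1 v = 1"
  by (simp add: peval_def)

lemma peval_prod: "peval (prod f A) v = (\<Prod>a\<in>A. peval (f a) v)"
  by (induction A rule: infinite_finite_induct) (auto simp: peval_mult)

lemma peval_pvar[simp]: "peval (pvar i) v = v i"
  by (simp add: pvar_def peval_single mv_def)

lemma pvars_add: "pvars (p + q) \<subseteq> pvars p \<union> pvars q"
  using keys_add[of p q] unfolding pvars_def by auto

lemma pvars_uminus[simp]: "pvars (- p) = pvars p"
  unfolding pvars_def by simp

lemma pvars_zero[simp]: "pvars 0 = {}"
  unfolding pvars_def by simp

lemma pvars_one[simp]: "pvars 1 = {}"
  unfolding pvars_def by simp

lemma pvars_pvar[simp]: "pvars (pvar i) = {i}"
  unfolding pvars_def pvar_def by simp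

lemma pvars_mult: "pvars (p * q) \<subseteq> pvars p \<union> pvars q"
proof
  fix i assume "i \<in> pvars (p * q)"
  then obtain mon where "mon \<in> Poly_Mapping.keys (p*q)" "i \<in> Poly_Mapping.keys mon"
    unfolding pvars_def by auto
  then obtain a b where "mon = a + b" "a \<in> Poly_Mapping.keys p" "b \<in> Poly_Mapping.keys q"
    using keys_mult[of p q] by auto
  then show "i \<in> pvars p \<union> pvars q"
    using keys_add[of a b] \<open>i \<in> Poly_Mapping.keys mon\<close> unfolding pvars_def by auto
qed

lemma pvars_diff: "pvars (p - q) \<subseteq> pvars p \<union> pvars q"
  using pvars_add[of p "-q"] by simp

lemma pvars_sum: "(\<And>a. a \<in> A \<Longrightarrow> pvars (f a) \<subseteq> V) \<Longrightarrow> pvars (sum f A) \<subseteq> V"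
  by (induction A rule: infinite_finite_induct) (use pvars_add in fastforce)+

lemma pvars_prod: "(\<And>a. a \<in> A \<Longrightarrow> pvars (f a) \<subseteq> V) \<Longrightarrow> pvars (prod f A) \<subseteq> V"
  by (induction A rule: infinite_finite_induct) (use pvars_mult in fastforce)+


lemma L_props: "1 \<le> j \<Longrightarrow> 1 \<le> Lidx e k j \<and> Lidx e k j \<le> j \<and> delta e k (Lidx e k j)"
proof -
  assume j: "1 \<le> j"
  have d1: "delta e k 1" by (simp add: delta_def)
  have "1 \<le> Lidx e k j \<and> Lidx e k j \<le> j \<and> delta e k (Lidx e k j)"
    unfolding Lidx_def
    by (rule GreatestI_nat[where k=1 and b=j]) (use j d1 in auto)
  then show ?thesis .
qed

lemma L_ge: "1 \<le> i \<Longrightarrow> i \<le> j \<Longrightarrow> delta e k i \<Longrightarrow> i \<le> Lidx e k j"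
  unfolding Lidx_def by (rule Greatest_le_nat[where b=j]) auto

lemma L_cong: "(\<And>i. 1 \<le> i \<Longrightarrow> i \<le> j \<Longrightarrow> delta e1 k i = delta e2 k i) \<Longrightarrow> Lidx e1 k j = Lidx e2 k j"
proof -
  assume h: "\<And>i. 1 \<le> i \<Longrightarrow> i \<le> j \<Longrightarrow> delta e1 k i = delta e2 k i"
  have "(\<lambda>i. 1 \<le> i \<and> i \<le> j \<and> delta e1 k i) = (\<lambda>i. 1 \<le> i \<and> i \<le> j \<and> delta e2 k i)"
    using h by auto
  then show ?thesis unfolding Lidx_def by simp
qed

lemma L_struct: "1 \<le> r \<Longrightarrow> r \<le> j \<Longrightarrow> Lidx e k j = Lidx e k r \<or> r < Lidx e k j"
proof -
  assume a: "1 \<le> r" "r \<le> j"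
  have 1: "Lidx e k r \<le> Lidx e k j" using L_props[of r e k] a L_ge[of "Lidx e k r" j e k] by auto
  show ?thesis
  proof (cases "Lidx e k j \<le> r")
    case True
    then have "Lidx e k j \<le> Lidx e k r" using L_props[of j e k] a L_ge[of "Lidx e k j" r e k] by auto
    then show ?thesis using 1 by auto
  qed auto
qed

lemma sum_split_mid: "a \<le> r + 1 \<Longrightarrow> r \<le> (j::nat) \<Longrightarrow>
   (\<Sum>l = a..j. f l) = (\<Sum>l = a..r. f l) + (\<Sum>l = r + 1..j. (f l :: 'a::comm_monoid_add))"
proof -
  assume "a \<le> r + 1" "r \<le> j"
  then have "{a..j} = {a..r} \<union> {r+1..j}" by auto
  then show ?thesis by (simp add: sum.union_disjoint)
qed

context
  fixes k r :: nat and eps eps' :: "nat \<Rightarrow> bool"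
  assumes r1: "1 \<le> r" and rk: "r \<le> k"
    and agree: "\<forall>i \<in> {1..k}. i \<noteq> r \<longrightarrow> eps i = eps' i"
begin

lemma delta_agree: "i \<noteq> r + 1 \<Longrightarrow> delta eps k i = delta eps' k i"
proof -
  assume i: "i \<noteq> r + 1"
  have "2 \<le> i \<Longrightarrow> i \<le> k + 1 \<Longrightarrow> eps (i - 1) = eps' (i - 1)"
  proof -
    assume "2 \<le> i" "i \<le> k + 1"
    then have "i - 1 \<in> {1..k}" "i - 1 \<noteq> r" using i by auto
    then show ?thesis using agree by blast
  qed
  then show ?thesis unfolding delta_def by auto
qed

lemma delta_r: "delta e k (r + 1) = e r"
  using r1 rk unfolding delta_def by auto

lemma L_low: "j \<le> r \<Longrightarrow> Lidx eps' k j = Lidx eps k j"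
  by (rule L_cong) (use delta_agree in auto)

lemma Mpoly_key:
  assumes er: "eps r" and er': "\<not> eps' r" and j: "1 \<le> j"
  shows "Mpoly eps' k j = Mpoly eps k j \<or> Mpoly eps' k j = Mpoly eps k r + Mpoly eps k j"
proof (cases "j \<le> r")
  case True
  then show ?thesis using L_low[of j] by (simp add: Mpoly_def)
next
  case False
  have d: "delta eps k (r+1)" "\<not> delta eps' k (r+1)" using er er' delta_r by auto
  have ge: "r + 1 \<le> Lidx eps k j" using False d L_ge[of "r+1" j eps k] by auto
  show ?thesis
  proof (cases "Lidx eps k j = r + 1")
    case False
    have p: "1 \<le> Lidx eps k j \<and> Lidx eps k j \<le> j \<and> delta eps k (Lidx eps k j)"
      using L_props j by blast
    have p': "1 \<le> Lidx eps' k j \<and> Lidx eps' k j \<le> j \<and> delta eps' k (Lidx eps' k j)"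
      using L_props j by blast
    have "Lidx eps k j \<le> Lidx eps' k j"
      using p False delta_agree[of "Lidx eps k j"] L_ge[of "Lidx eps k j" j eps' k] by auto
    moreover have "Lidx eps' k j \<noteq> r + 1" using p' d by auto
    then have "Lidx eps' k j \<le> Lidx eps k j"
      using p' delta_agree[of "Lidx eps' k j"] L_ge[of "Lidx eps' k j" j eps k] by auto
    ultimately show ?thesis by (simp add: Mpoly_def)
  next
    case True
    have p': "1 \<le> Lidx eps' k j \<and> Lidx eps' k j \<le> j \<and> delta eps' k (Lidx eps' k j)"
      using L_props j by blast
    have ne: "Lidx eps' k j \<noteq> r + 1" using p' d by auto
    have le: "Lidx eps' k j \<le> r"
    proof (rule ccontr)
      assume "\<not> ?thesis"
      then have "Lidx eps' k j \<le> Lidx eps k j"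
        using p' ne delta_agree[of "Lidx eps' k j"] L_ge[of "Lidx eps' k j" j eps k] by auto
      then show False using True ne \<open>\<not> Lidx eps' k j \<le> r\<close> by auto
    qed
    have "Lidx eps' k j = Lidx eps' k r"
      using L_struct[of r j eps' k] le False r1 by auto
    also have "\<dots> = Lidx eps k r" using L_low by simp
    finally have e: "Lidx eps' k j = Lidx eps k r" .
    have lr: "Lidx eps k r \<le> r" using L_props r1 by blast
    have "Mpoly eps' k j = (\<Sum>l = Lidx eps k r..j. pvar l)" using e by (simp add: Mpoly_def)
    also have "\<dots> = Mpoly eps k r + Mpoly eps k j"
      unfolding Mpoly_def True using lr False by (subst sum_split_mid) auto
    finally show ?thesis by simp
  qed
qed

end


lemma prod_diff_dvd:
  fixes u w :: "nat \<Rightarrow> mpoly"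
  assumes "finite A"
    and "\<And>j. j \<in> A \<Longrightarrow> \<exists>c. u j - w j = X * c \<and> pvars (u j) \<subseteq> V \<and> pvars (w j) \<subseteq> V \<and> pvars c \<subseteq> V"
  shows "\<exists>h. pvars h \<subseteq> V \<and> prod u A - prod w A = X * h"
  using assms
proof (induction A rule: finite_induct)
  case empty
  then show ?case by (intro exI[of _ 0]) auto
next
  case (insert a A)
  then obtain h where h: "pvars h \<subseteq> V" "prod u A - prod w A = X * h" by auto
  obtain ca where a: "u a - w a = X * ca" "pvars (u a) \<subseteq> V" "pvars (w a) \<subseteq> V" "pvars ca \<subseteq> V"
    using insert.prems by blast
  have "prod u (insert a A) - prod w (insert a A) = u a * (prod u A - prod w A) + (u a - w a) * prod w A"
    using insert.hyps by (simp add: algebra_simps)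
  also have "\<dots> = X * (u a * h + ca * prod w A)"
    by (simp add: h a algebra_simps)
  finally have e: "prod u (insert a A) - prod w (insert a A) = X * (u a * h + ca * prod w A)" .
  have "pvars (prod w A) \<subseteq> V" using insert.prems by (intro pvars_prod) auto
  then have "pvars (u a * h + ca * prod w A) \<subseteq> V"
    using pvars_add[of "u a * h"] pvars_mult[of "u a" h] pvars_mult[of "ca" "prod w A"] h a by blast
  then show ?case using e by blast
qed

lemma peval_Mpoly: "peval (Mpoly e k j) b = Mval e k b j"
  by (simp add: Mpoly_def Mval_def peval_sum)

lemma pvars_Mpoly: "j \<in> {1..n} \<Longrightarrow> pvars (Mpoly e k j) \<subseteq> {1..n}"
  unfolding Mpoly_def
  by (rule pvars_sum) (use L_props[of j e k] in auto)

theorem mainTheorem7: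
  fixes k m r :: nat and eps eps' :: "nat \<Rightarrow> bool"
  assumes "1 \<le> m" and "1 \<le> r" and "r \<le> k"
    and "\<forall>i \<in> {1..k}. i \<noteq> r \<longrightarrow> eps i = eps' i"
    and "eps r \<noteq> eps' r"
  shows "\<exists>f g :: mpoly. pvars f \<subseteq> {1..k + m} \<and> pvars g \<subseteq> {1..k + m} \<and>
           \<not> (Mpoly eps k r dvd g) \<and>
           (\<forall>b :: nat \<Rightarrow> real.
              (\<forall>j \<in> {1..k + m}. Mval eps k b j \<noteq> 0 \<and> Mval eps' k b j \<noteq> 0) \<longrightarrow>
              peval g b * (Pval eps k m b - Pval eps' k m b) = peval f b)"
proof -
  note r1 = assms(2) and rk = assms(3) and agree = assms(4)
  have agree': "\<forall>i \<in> {1..k}. i \<noteq> r \<longrightarrow> eps' i = eps i" using agree by auto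
  define J where "J = {1..k + m}"
  define J' where "J' = J - {r}"
  define X where "X = Mpoly eps k r"
  have rJ: "r \<in> J" using r1 rk unfolding J_def by auto
  have LR: "Lidx eps' k r = Lidx eps k r" using L_low[OF r1 rk agree] by simp
  have XX: "Mpoly eps' k r = X" unfolding X_def Mpoly_def using LR by simp
  have diff: "\<exists>c. (c = 0 \<or> c = 1 \<or> c = -1) \<and> Mpoly eps' k j - Mpoly eps k j = X * c"
    if j: "1 \<le> j" for j
  proof (cases "eps r")
    case True
    then have "\<not> eps' r" using assms(5) by auto
    from Mpoly_key[OF r1 rk agree True this j] show ?thesis
      unfolding X_def by (metis add_diff_cancel_right' diff_self mult_1_right mult_zero_right)
  next
    case False
    then have "eps' r" using assms(5) by auto
    from Mpoly_key[OF r1 rk agree' this False j] show ?thesis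
      unfolding XX[symmetric]
      by (metis add_diff_cancel_right' diff_self mult_zero_right minus_diff_eq mult_minus1_right)
  qed
  define Pi where "Pi = (\<Prod>j\<in>J'. Mpoly eps k j)"
  define Pi' where "Pi' = (\<Prod>j\<in>J'. Mpoly eps' k j)"
  obtain h where h: "pvars h \<subseteq> J" "Pi' - Pi = X * h"
  proof -
    have "\<exists>h. pvars h \<subseteq> J \<and> Pi' - Pi = X * h"
      unfolding Pi_def Pi'_def
    proof (rule prod_diff_dvd)
      show "finite J'" unfolding J'_def J_def by auto
      fix j assume jJ: "j \<in> J'"
      then have j1: "1 \<le> j" and jJ0: "j \<in> J" unfolding J'_def J_def by auto
      obtain c where c: "c = 0 \<or> c = 1 \<or> c = -1" "Mpoly eps' k j - Mpoly eps k j = X * c"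
        using diff[OF j1] by blast
      have "pvars c \<subseteq> J" using c(1) by auto
      then show "\<exists>c. Mpoly eps' k j - Mpoly eps k j = X * c \<and> pvars (Mpoly eps' k j) \<subseteq> J \<and>
          pvars (Mpoly eps k j) \<subseteq> J \<and> pvars c \<subseteq> J"
        using c(2) pvars_Mpoly[of j "k+m"] jJ0 unfolding J_def by auto
    qed
    then show ?thesis using that by blast
  qed
  define g where "g = Pi * Pi'"
  have pg: "pvars g \<subseteq> J"
    unfolding g_def Pi_def Pi'_def
    using pvars_mult pvars_prod[of J' "Mpoly eps k" J] pvars_prod[of J' "Mpoly eps' k" J]
      pvars_Mpoly[of _ "k+m"] unfolding J'_def J_def by blast
  \<comment> \<open>non-divisibility via a point\<close>
  define a0 where "a0 = Lidx eps k r"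
  have a0: "1 \<le> a0" "a0 \<le> r" using L_props[OF r1] unfolding a0_def by auto
  define b0 :: "nat \<Rightarrow> real" where "b0 = (\<lambda>l. if l = r then - real (r - a0) else 1)"
  have sum_out: "(\<Sum>l = a..j. b0 l) = real (j + 1 - a)" if "r \<notin> {a..j}" for a j
  proof -
    have "(\<Sum>l = a..j. b0 l) = (\<Sum>l = a..j. 1)" using that unfolding b0_def
      by (intro sum.cong) auto
    then show ?thesis by simp
  qed
  have sum_in: "(\<Sum>l = a0..j. b0 l) = real j - real r" if "r \<le> j" for j
  proof -
    have rin: "r \<in> {a0..j}" using that a0 by auto
    have "(\<Sum>l = a0..j. b0 l) = b0 r + (\<Sum>l \<in> {a0..j} - {r}. b0 l)"
      using rin by (simp add: sum.remove)
    also have "(\<Sum>l \<in> {a0..j} - {r}. b0 l) = (\<Sum>l \<in> {a0..j} - {r}. 1)"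
      unfolding b0_def by (intro sum.cong) auto
    also have "\<dots> = real (card ({a0..j} - {r}))" by simp
    also have "card ({a0..j} - {r}) = j + 1 - a0 - 1" using rin by (simp add: card_Diff_singleton)
    finally show ?thesis using a0 that unfolding b0_def by (simp add: of_nat_diff)
  qed
  have nz: "Mval e k b0 j \<noteq> 0" if e: "e = eps \<or> e = eps'" and jJ: "j \<in> J'" for e j
  proof -
    have j1: "1 \<le> j" and jr: "j \<noteq> r" using jJ unfolding J'_def J_def by auto
    have Le: "Lidx e k r = a0" using e LR unfolding a0_def by auto
    have pj: "1 \<le> Lidx e k j" "Lidx e k j \<le> j" using L_props[OF j1] by auto
    show ?thesis
    proof (cases "j < r")
      case True
      then show ?thesis unfolding Mval_def using sum_out[of "Lidx e k j" j] pj by auto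
    next
      case False
      then have "Lidx e k j = a0 \<or> r < Lidx e k j" using L_struct[OF r1, of j e k] Le by auto
      then show ?thesis
      proof
        assume "Lidx e k j = a0"
        then show ?thesis unfolding Mval_def using sum_in[of j] False jr by auto
      next
        assume "r < Lidx e k j"
        then show ?thesis unfolding Mval_def using sum_out[of "Lidx e k j" j] pj by auto
      qed
    qed
  qed
  have X0: "peval X b0 = 0"
    unfolding X_def peval_Mpoly Mval_def a0_def[symmetric] using sum_in[of r] by simp
  have gnz: "peval g b0 \<noteq> 0"
    unfolding g_def Pi_def Pi'_def peval_mult peval_prod peval_Mpoly
    using nz unfolding J'_def J_def by auto
  have ndvd: "\<not> X dvd g"
  proof
    assume "X dvd g"
    then obtain q where "g = X * q" by (auto elim: dvdE)
    then have "peval g b0 = 0" using X0 by (simp add: peval_mult)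
    then show False using gnz by simp
  qed
  have main: "peval g b * (Pval eps k m b - Pval eps' k m b) = peval h b"
    if hb: "\<forall>j \<in> {1..k + m}. Mval eps k b j \<noteq> 0 \<and> Mval eps' k b j \<noteq> 0" for b
  proof -
    define x where "x = Mval eps k b r"
    have x': "Mval eps' k b r = x" unfolding x_def Mval_def using LR by simp
    have x0: "x \<noteq> 0" using hb rJ unfolding x_def J_def by auto
    define p where "p = (\<Prod>j\<in>J'. Mval eps k b j)"
    define p' where "p' = (\<Prod>j\<in>J'. Mval eps' k b j)"
    have fJ: "finite J" unfolding J_def by auto
    have p0: "p \<noteq> 0" "p' \<noteq> 0" unfolding p_def p'_def using hb unfolding J'_def J_def by auto
    have P1: "Pval eps k m b = 1 / (x * p)"
      unfolding Pval_def J_def[symmetric] p_def J'_def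
      using prod.remove[OF fJ rJ, of "\<lambda>j. 1 / Mval eps k b j"] x_def
      by (simp add: prod_dividef)
    have P2: "Pval eps' k m b = 1 / (x * p')"
      unfolding Pval_def J_def[symmetric] p'_def J'_def
      using prod.remove[OF fJ rJ, of "\<lambda>j. 1 / Mval eps' k b j"] x'
      by (simp add: prod_dividef)
    have g: "peval g b = p * p'"
      unfolding g_def Pi_def Pi'_def peval_mult peval_prod peval_Mpoly p_def p'_def ..
    have "p' - p = x * peval h b"
      using arg_cong[OF h(2), of "\<lambda>q. peval q b"]
      unfolding Pi_def Pi'_def peval_diff peval_mult peval_prod peval_Mpoly X_def p_def p'_def x_def .
    then have hv: "peval h b = (p' - p) / x" using x0 by simp
    have "p * p' * (1 / (x * p) - 1 / (x * p')) = (p' - p) / x"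
      using x0 p0 by (simp add: field_simps)
    then show ?thesis unfolding P1 P2 g hv .
  qed
  show ?thesis
    using h(1) pg ndvd main unfolding J_def X_def by blast
qed


end
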